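(* $\mathfrak{cp}((\mathcal{P}(\omega)/\mathrm{fin})^-)=\mathfrak{r}$.
   Context: $\mathcal{P}(\omega)/\mathrm{fin}$ is the Boolean algebra of subsets of $\omega$ modulo finite sets; for a Boolean algebra $B$, $B^-=B\setminus\{0,1\}$ ordered by the Boolean order. For a poset $(P,\le)$, $F\subseteq P$ is a comparable family if for every $p\in P$ there is $q\in F$ with $p\le q$ or $q\le p$; $\mathfrak{cp}(P)$ is the minimal size of a comparable family. $\mathfrak{r}$ is the reaping number: the minimal size of a family $\mathcal{R}\subseteq[\omega]^\omega$ such that no single $X\subseteq\omega$ splits every member of $\mathcal{R}$ (i.e., for every $X$ there is $R\in\mathcal{R}$ with $R\subseteq^* X$ or $R\subseteq^*\omega\setminus X$). *)

theory Defs
  imports Main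
begin

definition almost_eq :: "(nat set \<times> nat set) set" where
  "almost_eq = {(A, B). finite ((A - B) \<union> (B - A))}"

definition Pfin :: "nat set set set" where
  "Pfin = (UNIV :: nat set set) // almost_eq"

definition fin_le :: "nat set set \<Rightarrow> nat set set \<Rightarrow> bool" where
  "fin_le X Y \<longleftrightarrow> (\<exists>A\<in>X. \<exists>B\<in>Y. finite (A - B))"

text \<open>B^- = B without 0 = [{}] and 1 = [omega].\<close>
definition Pfin_minus :: "nat set set set" where
  "Pfin_minus = Pfin - {almost_eq `` {{}}, almost_eq `` {UNIV}}"

definition comparable_family :: "'a set \<Rightarrow> ('a \<Rightarrow> 'a \<Rightarrow> bool) \<Rightarrow> 'a set \<Rightarrow> bool" where
  "comparable_family P le F \<longleftrightarrow> F \<subseteq> P \<and> (\<forall>p\<in>P. \<exists>q\<in>F. le p q \<or> le q p)"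

definition reaping_family :: "nat set set \<Rightarrow> bool" where
  "reaping_family R \<longleftrightarrow> (\<forall>S\<in>R. infinite S) \<and>
     (\<forall>X :: nat set. \<exists>S\<in>R. finite (S - X) \<or> finite (S - (UNIV - X)))"

end

theory Submission
  imports Defs
begin

lemma unb_inf:
  fixes S :: "nat set"
  assumes "\<And>m. \<exists>n\<ge>m. n \<in> S" shows "infinite S"
proof
  assume "finite S"
  then obtain k where "\<forall>n\<in>S. n < k" using finite_nat_set_iff_bounded by blast
  with assms[of k] show False by auto
qed

lemma inf_unb:
  fixes S :: "nat set"
  assumes "infinite S" shows "\<exists>n\<ge>m. n \<in> S"
proof (rule ccontr)
  assume "\<not> ?thesis"
  then have "S \<subseteq> {..<m}" by (auto simp: not_le)
  then show False using assms finite_subset by blast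
qed

definition nxt :: "nat set \<Rightarrow> nat \<Rightarrow> nat" where
  "nxt S m = (LEAST x. x \<in> S \<and> m \<le> x)"

lemma nxt_prop:
  assumes "infinite S" shows "nxt S m \<in> S \<and> m \<le> nxt S m"
proof -
  obtain n where "n \<ge> m" "n \<in> S" using inf_unb[OF assms] by blast
  then show ?thesis unfolding nxt_def by (metis (mono_tags, lifting) LeastI)
qed

primrec seqa :: "nat set set \<Rightarrow> nat \<Rightarrow> nat" where
  "seqa F 0 = 0"
| "seqa F (Suc k) = Suc (Max (insert (seqa F k) ((\<lambda>S. nxt S (seqa F k)) ` F)))"

lemma split_lemma:
  fixes F :: "nat set set"
  assumes fin: "finite F" and inf: "\<forall>S\<in>F. infinite S"
  shows "\<exists>X. \<forall>S\<in>F. infinite (S \<inter> X) \<and> infinite (S - X)"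
proof -
  let ?a = "seqa F"
  have fin2: "\<And>k. finite (insert (?a k) ((\<lambda>S. nxt S (?a k)) ` F))" using fin by simp
  have step: "\<And>k. ?a k < ?a (Suc k)"
    using fin2 by (simp add: le_imp_less_Suc)
  have nx: "\<And>k S. S \<in> F \<Longrightarrow> nxt S (?a k) \<in> S \<and> ?a k \<le> nxt S (?a k) \<and> nxt S (?a k) < ?a (Suc k)"
  proof -
    fix k S assume "S \<in> F"
    then have "nxt S (?a k) \<le> Max (insert (?a k) ((\<lambda>S. nxt S (?a k)) ` F))"
      using fin2 by (intro Max_ge) auto
    then show "nxt S (?a k) \<in> S \<and> ?a k \<le> nxt S (?a k) \<and> nxt S (?a k) < ?a (Suc k)"
      using nxt_prop inf \<open>S \<in> F\<close> by auto
  qed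
  have sm: "strict_mono ?a" using step by (simp add: strict_mono_Suc_iff)
  have ge: "\<And>k. k \<le> ?a k" using sm by (simp add: strict_mono_imp_increasing)
  define X where "X = {x. \<exists>k. ?a (2*k) \<le> x \<and> x < ?a (2*k+1)}"
  have "infinite (S \<inter> X) \<and> infinite (S - X)" if "S \<in> F" for S
  proof
    show "infinite (S \<inter> X)"
    proof (rule unb_inf)
      fix m
      let ?y = "nxt S (?a (2*m))"
      have "?y \<in> S" "?a (2*m) \<le> ?y" "?y < ?a (2*m+1)" using nx[OF that, of "2*m"] by auto
      moreover have "m \<le> ?a (2*m)" using ge[of "2*m"] by simp
      ultimately show "\<exists>n\<ge>m. n \<in> S \<inter> X" unfolding X_def by (intro exI[of _ ?y]) auto
    qed
    show "infinite (S - X)"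
    proof (rule unb_inf)
      fix m
      let ?y = "nxt S (?a (2*m+1))"
      have y: "?y \<in> S" "?a (2*m+1) \<le> ?y" "?y < ?a (2*m+2)" using nx[OF that, of "2*m+1"] by auto
      have "?y \<notin> X"
      proof
        assume "?y \<in> X"
        then obtain k where k: "?a (2*k) \<le> ?y" "?y < ?a (2*k+1)" unfolding X_def by auto
        have "?a (2*k) < ?a (2*m+2)" using k y by linarith
        then have "2*k < 2*m+2" using strict_mono_less[OF sm] by blast
        moreover have "?a (2*m+1) < ?a (2*k+1)" using k y by linarith
        then have "2*m+1 < 2*k+1" using strict_mono_less[OF sm] by blast
        ultimately show False by presburger
      qed
      moreover have "m \<le> ?y" using ge[of "2*m+1"] y by linarith
      ultimately show "\<exists>n\<ge>m. n \<in> S - X" using y by blast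
    qed
  qed
  then show ?thesis by blast
qed

lemma reaping_infinite:
  assumes "reaping_family R" shows "infinite R"
proof
  assume "finite R"
  moreover have "\<forall>S\<in>R. infinite S" using assms unfolding reaping_family_def by blast
  ultimately obtain X where X: "\<forall>S\<in>R. infinite (S \<inter> X) \<and> infinite (S - X)"
    using split_lemma by blast
  then obtain S where "S \<in> R" "finite (S - X) \<or> finite (S - (UNIV - X))"
    using assms unfolding reaping_family_def by blast
  moreover have "S - (UNIV - X) = S \<inter> X" by blast
  ultimately show False using X by auto
qed

lemma ae_iff: "(A, B) \<in> almost_eq \<longleftrightarrow> finite (A - B) \<and> finite (B - A)"
  unfolding almost_eq_def by auto

lemma mem_class: "B \<in> almost_eq `` {A} \<longleftrightarrow> finite (A - B) \<and> finite (B - A)"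
  unfolding almost_eq_def by auto

lemma class_eq:
  assumes "finite ((A - B) \<union> (B - A))"
  shows "almost_eq `` {A} = almost_eq `` {B}"
proof (rule set_eqI)
  fix C
  have a: "finite (A - B)" "finite (B - A)" using assms by auto
  have "finite ((A - C) \<union> (C - A)) \<longleftrightarrow> finite ((B - C) \<union> (C - B))"
  proof
    assume h: "finite ((A - C) \<union> (C - A))"
    have "(B - C) \<union> (C - B) \<subseteq> (B - A) \<union> (A - C) \<union> (C - A) \<union> (A - B)" by blast
    then show "finite ((B - C) \<union> (C - B))" using h a finite_subset by blast
  next
    assume h: "finite ((B - C) \<union> (C - B))"
    have "(A - C) \<union> (C - A) \<subseteq> (A - B) \<union> (B - C) \<union> (C - B) \<union> (B - A)" by blast
    then show "finite ((A - C) \<union> (C - A))" using h a finite_subset by blast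
  qed
  then show "C \<in> almost_eq `` {A} \<longleftrightarrow> C \<in> almost_eq `` {B}" by (simp add: mem_class ae_iff)
qed

lemma Pfin_elem: "p \<in> Pfin \<Longrightarrow> \<exists>A. p = almost_eq `` {A}"
  unfolding Pfin_def quotient_def by auto

lemma Pfin_minus_iff:
  "almost_eq `` {X} \<in> Pfin_minus \<longleftrightarrow> infinite X \<and> infinite (UNIV - X)"
proof -
  have inP: "almost_eq `` {X} \<in> Pfin" unfolding Pfin_def quotient_def by auto
  have self: "X \<in> almost_eq `` {X}" by (simp add: mem_class ae_iff)
  have e1: "almost_eq `` {X} = almost_eq `` {{}} \<longleftrightarrow> finite X"
  proof
    assume "almost_eq `` {X} = almost_eq `` {{}}"
    then show "finite X" using self by (simp add: mem_class ae_iff)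
  next
    assume "finite X" then show "almost_eq `` {X} = almost_eq `` {{}}" by (intro class_eq) simp
  qed
  have e2: "almost_eq `` {X} = almost_eq `` {UNIV} \<longleftrightarrow> finite (UNIV - X)"
  proof
    assume "almost_eq `` {X} = almost_eq `` {UNIV}"
    then show "finite (UNIV - X)" using self by (simp add: mem_class ae_iff)
  next
    assume "finite (UNIV - X)" then show "almost_eq `` {X} = almost_eq `` {UNIV}" by (intro class_eq) simp
  qed
  show ?thesis unfolding Pfin_minus_def using inP e1 e2 by auto
qed

lemma fin_le_iff: "fin_le (almost_eq `` {X}) (almost_eq `` {A}) \<longleftrightarrow> finite (X - A)"
proof
  assume "fin_le (almost_eq `` {X}) (almost_eq `` {A})"
  then obtain X' A' where h: "X' \<in> almost_eq `` {X}" "A' \<in> almost_eq `` {A}" "finite (X' - A')"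
    unfolding fin_le_def by blast
  have "X - A \<subseteq> (X - X') \<union> (X' - A') \<union> (A' - A)" by blast
  moreover have "finite ((X - X') \<union> (X' - A') \<union> (A' - A))" using h by (simp add: mem_class ae_iff)
  ultimately show "finite (X - A)" using finite_subset by blast
next
  assume "finite (X - A)"
  moreover have "X \<in> almost_eq `` {X}" "A \<in> almost_eq `` {A}" by (simp_all add: mem_class ae_iff)
  ultimately show "fin_le (almost_eq `` {X}) (almost_eq `` {A})"
    unfolding fin_le_def by blast
qed

lemma Pfin_minus_nonempty: "\<exists>X. almost_eq `` {X} \<in> Pfin_minus"
proof -
  obtain X :: "nat set" where "\<forall>S\<in>{UNIV}. infinite (S \<inter> X) \<and> infinite (S - X)"
    using split_lemma[of "{UNIV::nat set}"] by auto
  then show ?thesis by (auto simp: Pfin_minus_iff)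
qed

lemma union_le:
  assumes "infinite F" 
  shows "(card_of (f ` F \<union> g ` F), card_of F) \<in> ordLeq"
proof -
  have co: "Card_order (card_of F)" by (rule card_of_Card_order)
  show ?thesis
    by (rule card_of_Un_ordLeq_infinite_Field) (use assms co in \<open>auto simp: card_of_image Field_card_of\<close>)
qed

theorem mainTheorem6:
  shows "(\<forall>F. comparable_family Pfin_minus fin_le F \<longrightarrow>
            (\<exists>R. reaping_family R \<and> (card_of R, card_of F) \<in> ordLeq)) \<and>
         (\<forall>R. reaping_family R \<longrightarrow>
            (\<exists>F. comparable_family Pfin_minus fin_le F \<and> (card_of F, card_of R) \<in> ordLeq))"
proof (intro conjI allI impI)
  fix F assume cf: "comparable_family Pfin_minus fin_le F"
  have sub: "F \<subseteq> Pfin_minus" and cmp: "\<forall>p\<in>Pfin_minus. \<exists>q\<in>F. fin_le p q \<or> fin_le q p"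
    using cf unfolding comparable_family_def by auto
  have "\<forall>q\<in>F. \<exists>A. q = almost_eq `` {A}"
    using sub Pfin_elem unfolding Pfin_minus_def by blast
  then obtain A where A: "\<And>q. q \<in> F \<Longrightarrow> q = almost_eq `` {A q}" by metis
  have Ainf: "infinite (A q) \<and> infinite (UNIV - A q)" if "q \<in> F" for q
  proof -
    have "almost_eq `` {A q} \<in> Pfin_minus" using A[OF that] sub that by auto
    then show ?thesis using Pfin_minus_iff by blast
  qed
  obtain q0 where q0: "q0 \<in> F"
    using Pfin_minus_nonempty cmp by blast
  define R where "R = A ` F \<union> (\<lambda>q. UNIV - A q) ` F"
  have reap: "reaping_family R"
    unfolding reaping_family_def
  proof (intro conjI ballI allI)
    fix S assume "S \<in> R" then show "infinite S" using Ainf unfolding R_def by auto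
  next
    fix X :: "nat set"
    show "\<exists>S\<in>R. finite (S - X) \<or> finite (S - (UNIV - X))"
    proof (cases "finite X")
      case True
      have "A q0 - (UNIV - X) \<subseteq> X" by blast
      then show ?thesis using True q0 finite_subset unfolding R_def by blast
    next
      case False
      show ?thesis
      proof (cases "finite (UNIV - X)")
        case True
        have "A q0 - X \<subseteq> UNIV - X" by blast
        then show ?thesis using True q0 finite_subset unfolding R_def by blast
      next
        case False2: False
        then have "almost_eq `` {X} \<in> Pfin_minus" using False Pfin_minus_iff by blast
        then obtain q where q: "q \<in> F" "fin_le (almost_eq `` {X}) q \<or> fin_le q (almost_eq `` {X})"
          using cmp by blast
        then have "fin_le (almost_eq `` {X}) (almost_eq `` {A q}) \<or> fin_le (almost_eq `` {A q}) (almost_eq `` {X})"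
          using A[OF q(1)] by simp
        then have "finite (X - A q) \<or> finite (A q - X)" by (simp only: fin_le_iff)
        moreover have "(UNIV - A q) - (UNIV - X) = X - A q" by blast
        moreover have "A q \<in> R" "UNIV - A q \<in> R" using q(1) unfolding R_def by auto
        ultimately show ?thesis by metis
      qed
    qed
  qed
  have "infinite F"
  proof
    assume "finite F" then have "finite R" unfolding R_def by simp
    then show False using reaping_infinite reap by blast
  qed
  then have "(card_of R, card_of F) \<in> ordLeq" unfolding R_def by (rule union_le)
  then show "\<exists>R. reaping_family R \<and> (card_of R, card_of F) \<in> ordLeq" using reap by blast
next
  fix R assume reap: "reaping_family R"
  have Rinf: "\<And>S. S \<in> R \<Longrightarrow> infinite S" using reap unfolding reaping_family_def by blast
  have "\<forall>S\<in>R. \<exists>H. infinite (S \<inter> H) \<and> infinite (S - H)"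
  proof
    fix S assume "S \<in> R"
    then show "\<exists>H. infinite (S \<inter> H) \<and> infinite (S - H)"
      using split_lemma[of "{S}"] Rinf by auto
  qed
  then obtain H where H: "\<And>S. S \<in> R \<Longrightarrow> infinite (S \<inter> H S) \<and> infinite (S - H S)" by metis
  define T where "T S = S \<inter> H S" for S
  define F where "F = (\<lambda>S. almost_eq `` {T S}) ` R \<union> (\<lambda>S. almost_eq `` {UNIV - T S}) ` R"
  have sub: "F \<subseteq> Pfin_minus"
  proof
    fix p assume "p \<in> F"
    then obtain S where S: "S \<in> R" "p = almost_eq `` {T S} \<or> p = almost_eq `` {UNIV - T S}"
      unfolding F_def by blast
    have i1: "infinite (T S)" using H[OF S(1)] unfolding T_def by simp
    have "S - H S \<subseteq> UNIV - T S" unfolding T_def by blast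
    then have i2: "infinite (UNIV - T S)" using H[OF S(1)] finite_subset by blast
    have "UNIV - (UNIV - T S) = T S" by blast
    then have "almost_eq `` {T S} \<in> Pfin_minus" "almost_eq `` {UNIV - T S} \<in> Pfin_minus"
      using i1 i2 by (simp_all only: Pfin_minus_iff) auto
    then show "p \<in> Pfin_minus" using S(2) by auto
  qed
  have cmp: "\<forall>p\<in>Pfin_minus. \<exists>q\<in>F. fin_le p q \<or> fin_le q p"
  proof
    fix p assume "p \<in> Pfin_minus"
    then obtain X where X: "p = almost_eq `` {X}" using Pfin_elem unfolding Pfin_minus_def by blast
    obtain S where S: "S \<in> R" "finite (S - X) \<or> finite (S - (UNIV - X))"
      using reap unfolding reaping_family_def by blast
    show "\<exists>q\<in>F. fin_le p q \<or> fin_le q p"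
    proof (cases "finite (S - X)")
      case True
      have "T S - X \<subseteq> S - X" unfolding T_def by blast
      then have "finite (T S - X)" using True finite_subset by blast
      then have "fin_le (almost_eq `` {T S}) p" unfolding X by (simp only: fin_le_iff)
      then show ?thesis using S(1) unfolding F_def by blast
    next
      case False
      then have f: "finite (S - (UNIV - X))" using S by blast
      have "X - (UNIV - T S) \<subseteq> S - (UNIV - X)" unfolding T_def by blast
      then have "finite (X - (UNIV - T S))" using f finite_subset by blast
      then have "fin_le p (almost_eq `` {UNIV - T S})" unfolding X by (simp only: fin_le_iff)
      then show ?thesis using S(1) unfolding F_def by blast
    qed
  qed
  have "(card_of F, card_of R) \<in> ordLeq"
    unfolding F_def by (rule union_le) (rule reaping_infinite[OF reap])
  then show "\<exists>F. comparable_family Pfin_minus fin_le F \<and> (card_of F, card_of R) \<in> ordLeq"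
    using sub cmp unfolding comparable_family_def by blast
qed

end
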